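(* For a unitary boundary triple $\{\mathcal H,\Gamma_0,\Gamma_1\}$ for $A^*$ with $A_*=\operatorname{dom}\Gamma$, the following are equivalent: (i) $\Gamma_0:A_*\to\mathcal H$ is bounded (with respect to the norm of $\mathfrak H^2$) and $\operatorname{ran}\Gamma_0=\mathcal H$; (ii) $\Gamma_1:A_*\to\mathcal H$ is bounded and $\operatorname{ran}\Gamma_1=\mathcal H$; (iii) $\{\mathcal H,\Gamma_0,\Gamma_1\}$ is an ordinary boundary triple for $A^*$. *)

theory Defs
  imports "HOL-Analysis.Analysis"
begin

text \<open>HOL-Analysis only provides real inner product spaces, so we introduce
complex Hilbert spaces as a type class: a real Banach space carrying a complex
scalar multiplication compatible with the real one and a sesquilinear
(linear in the first, antilinear in the second argument), Hermitian inner
product inducing the norm.\<close>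

class complex_hilbert = real_normed_vector + complete_space +
  fixes cscale :: "complex \<Rightarrow> 'a \<Rightarrow> 'a"
    and cinner :: "'a \<Rightarrow> 'a \<Rightarrow> complex"
  assumes cscale_add_right: "cscale a (x + y) = cscale a x + cscale a y"
    and cscale_add_left: "cscale (a + b) x = cscale a x + cscale b x"
    and cscale_cscale: "cscale a (cscale b x) = cscale (a * b) x"
    and cscale_of_real: "cscale (complex_of_real r) x = r *\<^sub>R x"
    and cinner_add_left: "cinner (x + y) z = cinner x z + cinner y z"
    and cinner_cscale_left: "cinner (cscale a x) y = a * cinner x y"
    and cinner_commute: "cinner y x = cnj (cinner x y)"
    and cinner_norm: "cinner x x = complex_of_real ((norm x)\<^sup>2)"

text \<open>Elements of \<open>\<frak>h\<^sup>2 = \<frak>h \<oplus> \<frak>h\<close> are pairs \<open>(f, f')\<close>; the norm of the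
product type is \<open>sqrt (\<parallel>f\<parallel>\<^sup>2 + \<parallel>f'\<parallel>\<^sup>2)\<close>, the norm of \<open>\<frak>h\<^sup>2\<close>.\<close>

definition clinear_subspace :: "'a::complex_hilbert set \<Rightarrow> bool" where
  "clinear_subspace S \<longleftrightarrow> 0 \<in> S \<and> (\<forall>x\<in>S. \<forall>y\<in>S. x + y \<in> S)
      \<and> (\<forall>a. \<forall>x\<in>S. cscale a x \<in> S)"

instantiation prod :: (complex_hilbert, complex_hilbert) complex_hilbert
begin
definition cscale_prod_def: "cscale a x = (cscale a (fst x), cscale a (snd x))"
definition cinner_prod_def: "cinner x y = cinner (fst x) (fst y) + cinner (snd x) (snd y)"
instance
proof
  fix a b :: complex and x y z :: "'a \<times> 'b" and r :: real
  show "cscale a (x + y) = cscale a x + cscale a y"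
    by (simp add: cscale_prod_def cscale_add_right)
  show "cscale (a + b) x = cscale a x + cscale b x"
    by (simp add: cscale_prod_def cscale_add_left)
  show "cscale a (cscale b x) = cscale (a * b) x"
    by (simp add: cscale_prod_def cscale_cscale)
  show "cscale (complex_of_real r) x = r *\<^sub>R x"
    by (simp add: cscale_prod_def cscale_of_real scaleR_prod_def)
  show "cinner (x + y) z = cinner x z + cinner y z"
    by (simp add: cinner_prod_def cinner_add_left)
  show "cinner (cscale a x) y = a * cinner x y"
    by (simp add: cinner_prod_def cscale_prod_def cinner_cscale_left distrib_left)
  show "cinner y x = cnj (cinner x y)"
    by (simp add: cinner_prod_def cinner_commute[of "fst x"] cinner_commute[of "snd x"])
  show "cinner x x = complex_of_real ((norm x)\<^sup>2)"
    by (simp add: cinner_prod_def cinner_norm norm_prod_def)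
qed
end

definition clinear_on :: "'a::complex_hilbert set \<Rightarrow> ('a \<Rightarrow> 'b::complex_hilbert) \<Rightarrow> bool" where
  "clinear_on S T \<longleftrightarrow> (\<forall>x\<in>S. \<forall>y\<in>S. T (x + y) = T x + T y)
      \<and> (\<forall>a. \<forall>x\<in>S. T (cscale a x) = cscale a (T x))"

definition adjoint_rel :: "('h::complex_hilbert \<times> 'h) set \<Rightarrow> ('h \<times> 'h) set" where
  "adjoint_rel A = {(g, g'). \<forall>(f, f') \<in> A. cinner f' g = cinner f g'}"

definition closed_symmetric_rel :: "('h::complex_hilbert \<times> 'h) set \<Rightarrow> bool" where
  "closed_symmetric_rel A \<longleftrightarrow> clinear_subspace A \<and> closed A \<and> A \<subseteq> adjoint_rel A"

text \<open>The Krein-space form on \<open>\<frak>h\<^sup>2\<close> (up to the factor \<open>i\<close>):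
  \<open>(f',g)\<^sub>\<frak>h - (f,g')\<^sub>\<frak>h\<close>.\<close>

definition green :: "('h::complex_hilbert \<times> 'h) \<Rightarrow> ('h \<times> 'h) \<Rightarrow> complex" where
  "green fh gh = cinner (snd fh) (fst gh) - cinner (fst fh) (snd gh)"

text \<open>A unitary boundary triple \<open>{\<H>, \<Gamma>\<^sub>0, \<Gamma>\<^sub>1}\<close> for \<open>A\<^sup>*\<close>: the operator
\<open>\<Gamma> = (\<Gamma>\<^sub>0, \<Gamma>\<^sub>1) : \<frak>h\<^sup>2 \<supseteq> A\<^sub>* \<rightarrow> \<H>\<^sup>2\<close>, \<open>A\<^sub>* = dom \<Gamma>\<close>, is a boundary relation
for \<open>A\<^sup>*\<close> (Derkach-Hassi-Malamud-de Snoo): (A1) \<open>dom \<Gamma>\<close> is dense in \<open>A\<^sup>*\<close> and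
Green's identity holds on it; (A2) maximality: every \<open>(g\<^sup>^, k\<^sup>^) \<in> \<frak>h\<^sup>2 \<times> \<H>\<^sup>2\<close>
satisfying Green's identity against all of \<open>\<Gamma>\<close> belongs to \<open>\<Gamma>\<close>
(equivalently, \<open>\<Gamma>\<close> is unitary between the Krein spaces \<open>(\<frak>h\<^sup>2,J\<^sub>\<frak>h)\<close>,
\<open>(\<H>\<^sup>2,J\<^sub>\<H>)\<close> with \<open>ker \<Gamma> = A\<close>).\<close>

definition unitary_boundary_triple ::
  "('h::complex_hilbert \<times> 'h) set \<Rightarrow> ('h \<times> 'h) set
     \<Rightarrow> ('h \<times> 'h \<Rightarrow> 'k::complex_hilbert) \<Rightarrow> ('h \<times> 'h \<Rightarrow> 'k) \<Rightarrow> bool" where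
  "unitary_boundary_triple A Astar \<Gamma>0 \<Gamma>1 \<longleftrightarrow>
     closed_symmetric_rel A \<and>
     clinear_subspace Astar \<and> Astar \<subseteq> adjoint_rel A \<and> closure Astar = adjoint_rel A \<and>
     clinear_on Astar \<Gamma>0 \<and> clinear_on Astar \<Gamma>1 \<and>
     (\<forall>fh\<in>Astar. \<forall>gh\<in>Astar.
        green fh gh = cinner (\<Gamma>1 fh) (\<Gamma>0 gh) - cinner (\<Gamma>0 fh) (\<Gamma>1 gh)) \<and>
     (\<forall>gh k0 k1. (\<forall>fh\<in>Astar. green fh gh = cinner (\<Gamma>1 fh) k0 - cinner (\<Gamma>0 fh) k1)
        \<longrightarrow> gh \<in> Astar \<and> \<Gamma>0 gh = k0 \<and> \<Gamma>1 gh = k1)"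

definition ordinary_boundary_triple ::
  "('h::complex_hilbert \<times> 'h) set \<Rightarrow> ('h \<times> 'h) set
     \<Rightarrow> ('h \<times> 'h \<Rightarrow> 'k::complex_hilbert) \<Rightarrow> ('h \<times> 'h \<Rightarrow> 'k) \<Rightarrow> bool" where
  "ordinary_boundary_triple A Astar \<Gamma>0 \<Gamma>1 \<longleftrightarrow>
     closed_symmetric_rel A \<and> Astar = adjoint_rel A \<and>
     clinear_on Astar \<Gamma>0 \<and> clinear_on Astar \<Gamma>1 \<and>
     (\<forall>fh\<in>Astar. \<forall>gh\<in>Astar.
        green fh gh = cinner (\<Gamma>1 fh) (\<Gamma>0 gh) - cinner (\<Gamma>0 fh) (\<Gamma>1 gh)) \<and>
     (\<lambda>fh. (\<Gamma>0 fh, \<Gamma>1 fh)) ` Astar = UNIV"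

definition bounded_on :: "'a::real_normed_vector set \<Rightarrow> ('a \<Rightarrow> 'b::real_normed_vector) \<Rightarrow> bool" where
  "bounded_on S T \<longleftrightarrow> (\<exists>C. \<forall>x\<in>S. norm (T x) \<le> C * norm x)"

end

theory Submission
  imports Defs
begin



lemma cinner_zero_left [simp]:
  fixes x y z :: "'a::complex_hilbert"
  shows "cinner 0 y = 0"
  using cinner_add_left[of 0 0 y] by simp

lemma cinner_minus_left [simp]:
  fixes x y z :: "'a::complex_hilbert"
  shows "cinner (- x) y = - cinner x y"
proof -
  have "cinner x y + cinner (-x) y = 0" using cinner_add_left[of x "-x" y] by simp
  then show ?thesis by (simp add: add_eq_0_iff)
qed

lemma cinner_diff_left:
  fixes x y z :: "'a::complex_hilbert"
  shows "cinner (x - y) z = cinner x z - cinner y z"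
  using cinner_add_left[of x "-y" z] by simp

lemma cinner_scaleR_left:
  fixes x y z :: "'a::complex_hilbert"
  shows "cinner (r *\<^sub>R x) y = complex_of_real r * cinner x y"
  using cinner_cscale_left[of "complex_of_real r" x y] by (simp only: cscale_of_real)

lemma cinner_add_right:
  fixes x y z :: "'a::complex_hilbert"
  shows "cinner x (y + z) = cinner x y + cinner x z"
  using cinner_commute[of x "y+z"] cinner_commute[of x y] cinner_commute[of x z]
  by (simp add: cinner_add_left)

lemma cinner_zero_right [simp]:
  fixes x y z :: "'a::complex_hilbert"
  shows "cinner x 0 = 0"
  using cinner_commute[of x 0] by simp

lemma cinner_minus_right [simp]:
  fixes x y z :: "'a::complex_hilbert"
  shows "cinner x (- y) = - cinner x y"
  using cinner_commute[of x "-y"] cinner_commute[of x y] by simp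

lemma cinner_diff_right:
  fixes x y z :: "'a::complex_hilbert"
  shows "cinner x (y - z) = cinner x y - cinner x z"
  using cinner_commute[of x "y-z"] cinner_commute[of x y] cinner_commute[of x z]
  by (simp add: cinner_diff_left)

lemma cinner_cscale_right:
  fixes x y z :: "'a::complex_hilbert"
  shows "cinner x (cscale a y) = cnj a * cinner x y"
  using cinner_commute[of x "cscale a y"] cinner_commute[of x y] by (simp add: cinner_cscale_left)

lemma cinner_scaleR_right:
  fixes x y z :: "'a::complex_hilbert"
  shows "cinner x (r *\<^sub>R y) = complex_of_real r * cinner x y"
  using cinner_cscale_right[of x "complex_of_real r" y] by (simp only: cscale_of_real complex_cnj_complex_of_real)

lemma Re_cinner_self:
  fixes x y z :: "'a::complex_hilbert"
  shows "Re (cinner x x) = (norm x)\<^sup>2"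
  by (simp add: cinner_norm)

lemma norm_add_sq:
  fixes x y z :: "'a::complex_hilbert"
  shows "(norm (x + y))\<^sup>2 = (norm x)\<^sup>2 + (norm y)\<^sup>2 + 2 * Re (cinner x y)"
proof -
  have "cinner (x+y) (x+y) = cinner x x + cinner y y + (cinner x y + cnj (cinner x y))"
    by (simp add: cinner_add_left cinner_add_right cinner_commute[of y x])
  then have "Re (cinner (x+y) (x+y)) = Re (cinner x x) + Re (cinner y y) + 2 * Re (cinner x y)"
    by simp
  then show ?thesis by (simp add: Re_cinner_self)
qed

lemma cauchy_schwarz:
  fixes x y z :: "'a::complex_hilbert"
  shows "cmod (cinner x y) \<le> norm x * norm y"
proof (cases "y = 0")
  case True then show ?thesis by simp
next
  case False
  define ny where "ny = (norm y)\<^sup>2"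
  have ny: "ny > 0" using False by (simp add: ny_def)
  define c where "c = cinner x y"
  define t where "t = c / complex_of_real ny"
  define z where "z = x - cscale t y"
  have yy: "cinner y y = complex_of_real ny" by (simp add: ny_def cinner_norm)
  have "cinner z z = cinner x x - cnj t * c - t * cnj c + t * cnj t * complex_of_real ny"
  proof -
    have e1: "cinner x (cscale t y) = cnj t * c" by (simp add: cinner_cscale_right c_def)
    have e2: "cinner (cscale t y) x = t * cnj c"
      by (simp add: cinner_cscale_left c_def cinner_commute[of y x])
    have e3: "cinner (cscale t y) (cscale t y) = t * cnj t * complex_of_real ny"
      by (simp add: cinner_cscale_left cinner_cscale_right yy mult.assoc)
    have "cinner z z = cinner x x - cinner (cscale t y) x - (cinner x (cscale t y) - cinner (cscale t y) (cscale t y))"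
      unfolding z_def by (simp only: cinner_diff_left cinner_diff_right)
    then show ?thesis unfolding e1 e2 e3 by simp
  qed
  have nyc: "complex_of_real ny \<noteq> 0" using ny by simp
  have k1: "cnj t * c = c * cnj c / complex_of_real ny"
    unfolding t_def using nyc by (simp add: mult.commute)
  have k2: "t * cnj c = c * cnj c / complex_of_real ny"
    unfolding t_def by simp
  have k3: "t * cnj t * complex_of_real ny = c * cnj c / complex_of_real ny"
    unfolding t_def using nyc by (simp add: power2_eq_square)
  have k4: "Re (c * cnj c / complex_of_real ny) = (cmod c)^2 / ny"
    by (metis Re_divide_of_real complex_norm_square of_real_power Re_complex_of_real)
  note \<open>cinner z z = _\<close>
  also have "cinner x x - cnj t * c - t * cnj c + t * cnj t * complex_of_real ny
      = cinner x x - c * cnj c / complex_of_real ny"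
    unfolding k1 k2 k3 by simp
  finally have "Re (cinner z z) = (norm x)\<^sup>2 - (cmod c)\<^sup>2 / ny"
    by (simp only: Re_cinner_self k4 minus_complex.sel)
  moreover have "Re (cinner z z) \<ge> 0" by (simp add: Re_cinner_self)
  ultimately have "(cmod c)\<^sup>2 / ny \<le> (norm x)\<^sup>2" by simp
  then have "(cmod c)\<^sup>2 \<le> (norm x)\<^sup>2 * ny" using ny by (simp add: divide_le_eq)
  then have "(cmod c)\<^sup>2 \<le> (norm x * norm y)\<^sup>2" by (simp add: ny_def power_mult_distrib)
  then show ?thesis unfolding c_def
    by (meson mult_nonneg_nonneg norm_ge_zero power2_le_imp_le)
qed




lemma bounded_linear_cinner_right: "bounded_linear (\<lambda>k. cinner (v::'a::complex_hilbert) k)"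
proof (rule bounded_linear_intro[where K="norm v"])
  show "cinner v (x + y) = cinner v x + cinner v y" for x y by (rule cinner_add_right)
  show "cinner v (r *\<^sub>R x) = r *\<^sub>R cinner v x" for r x
    by (simp add: cinner_scaleR_right scaleR_conv_of_real)
  show "norm (cinner v x) \<le> norm x * norm v" for x
    using cauchy_schwarz[of v x] by (simp add: mult.commute)
qed

lemma bounded_linear_cinner_left: "bounded_linear (\<lambda>x. cinner x (k::'a::complex_hilbert))"
proof (rule bounded_linear_intro[where K="norm k"])
  show "cinner (x + y) k = cinner x k + cinner y k" for x y by (rule cinner_add_left)
  show "cinner (r *\<^sub>R x) k = r *\<^sub>R cinner x k" for r x
    by (simp add: cinner_scaleR_left scaleR_conv_of_real)
  show "norm (cinner x k) \<le> norm x * norm k" for x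
    using cauchy_schwarz[of x k] by simp
qed

lemma ubp:
  fixes V :: "'a::complex_hilbert set"
  assumes wb: "\<And>k. \<exists>C. \<forall>v\<in>V. cmod (cinner v k) \<le> C"
  shows "\<exists>B. \<forall>v\<in>V. norm v \<le> B"
proof -
  define E where "E n = {k. \<forall>v\<in>V. cmod (cinner v k) \<le> real n}" for n :: nat
  have clE: "closed (E n)" for n
  proof -
    have "E n = (\<Inter>v\<in>V. {k. cmod (cinner v k) \<le> real n})" by (auto simp: E_def)
    moreover have "closed {k. cmod (cinner v k) \<le> real n}" for v
      by (intro closed_Collect_le continuous_intros
          linear_continuous_on bounded_linear_cinner_right)
    ultimately show ?thesis by auto
  qed
  have cover: "\<Union>(range E) = UNIV"
  proof -
    have "k \<in> \<Union>(range E)" for k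
    proof -
      obtain C where C: "\<forall>v\<in>V. cmod (cinner v k) \<le> C" using wb by blast
      obtain n :: nat where "C \<le> real n" using real_arch_simple by blast
      then have "k \<in> E n" using C by (force simp: E_def)
      then show ?thesis by blast
    qed
    then show ?thesis by blast
  qed
  have "\<exists>n. interior (E n) \<noteq> {}"
  proof (rule ccontr)
    assume "\<not> ?thesis"
    then have "Met_TC.mtopology interior_of \<Union>(range E) = {}"
      by (intro Met_TC.metric_Baire_category_alt) (auto simp: clE complete_UNIV)
    then show False using cover by simp
  qed
  then obtain n k0 where "k0 \<in> interior (E n)" by blast
  then obtain r where r0: "r > 0" "ball k0 r \<subseteq> interior (E n)"
    using open_contains_ball[of "interior (E n)"] open_interior[of "E n"] by blast
  then have r: "r > 0" "ball k0 r \<subseteq> E n" using interior_subset by blast+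
  have "norm v \<le> 4 * real n / r" if v: "v \<in> V" for v
  proof (cases "v = 0")
    case True then show ?thesis using r by simp
  next
    case False
    then have nv: "norm v > 0" by simp
    define u where "u = (r / (2 * norm v)) *\<^sub>R v"
    have nu: "norm u = r / 2" using nv r by (simp add: u_def)
    have "k0 + u \<in> ball k0 r" using nu r by (simp add: dist_norm)
    then have a: "cmod (cinner v (k0 + u)) \<le> real n" using r v by (auto simp: E_def)
    have "k0 \<in> E n" using r centre_in_ball by blast
    then have b: "cmod (cinner v k0) \<le> real n" using v by (simp add: E_def)
    have "cinner v u = complex_of_real (r / (2 * norm v) * (norm v)\<^sup>2)"
      by (simp add: u_def cinner_scaleR_right cinner_norm)
    also have "\<dots> = complex_of_real (r * norm v / 2)" using nv
      by (simp add: power2_eq_square)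
    finally have "cmod (cinner v u) = \<bar>r * norm v / 2\<bar>" by (simp only: norm_of_real)
    then have "cmod (cinner v u) = r * norm v / 2" using r nv by simp
    moreover have "cmod (cinner v u) \<le> cmod (cinner v (k0 + u)) + cmod (cinner v k0)"
      using norm_triangle_ineq4[of "cinner v (k0 + u)" "cinner v k0"]
      by (simp add: cinner_add_right)
    ultimately have "r * norm v / 2 \<le> 2 * real n" using a b by simp
    then show ?thesis using r by (simp add: field_simps)
  qed
  then show ?thesis by blast
qed



lemma quad_nonneg_imp_zero:
  fixes a b :: real
  assumes "b \<ge> 0" and "\<And>t. 2 * t * a + t\<^sup>2 * b \<ge> 0"
  shows "a = 0"
proof (rule ccontr)
  assume "a \<noteq> 0"
  define t where "t = - a / (b + 1)"
  have b1: "b + 1 > 0" using assms by simp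
  have e: "(b+1)*t = -a" using b1 by (simp add: t_def)
  have "(b+1)\<^sup>2 * (2*t*a + t\<^sup>2*b) = 2*a*(b+1)*((b+1)*t) + ((b+1)*t)\<^sup>2*b"
    by (simp add: power2_eq_square algebra_simps)
  also have "\<dots> = -(a\<^sup>2*(b+2))" unfolding e by (simp add: power2_eq_square algebra_simps)
  finally have h: "(b+1)\<^sup>2 * (2*t*a + t\<^sup>2*b) = -(a\<^sup>2*(b+2))" .
  have "a\<^sup>2*(b+2) > 0" using \<open>a \<noteq> 0\<close> assms(1) by simp
  moreover have "(b+1)\<^sup>2 * (2*t*a + t\<^sup>2*b) \<ge> 0" using assms(2)[of t] by simp
  ultimately show False using h by linarith
qed

lemma riesz_sub:
  fixes S :: "'a::complex_hilbert set" and \<phi> :: "'a \<Rightarrow> complex"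
  assumes S0: "0 \<in> S" and Sadd: "\<forall>x\<in>S. \<forall>y\<in>S. x + y \<in> S"
    and Ssc: "\<forall>a. \<forall>x\<in>S. cscale a x \<in> S"
    and padd: "\<forall>x\<in>S. \<forall>y\<in>S. \<phi> (x + y) = \<phi> x + \<phi> y"
    and psc: "\<forall>a. \<forall>x\<in>S. \<phi> (cscale a x) = a * \<phi> x"
    and pb: "\<forall>x\<in>S. cmod (\<phi> x) \<le> C * norm x"
  shows "\<exists>w. \<forall>x\<in>S. \<phi> x = cinner x w"
proof -
  have SR: "r *\<^sub>R x \<in> S" if "x \<in> S" for r x
    using Ssc that by (metis cscale_of_real)
  define \<psi> where "\<psi> x = Re (\<phi> x)" for x
  have \<psi>add: "\<psi> (x + y) = \<psi> x + \<psi> y" if "x \<in> S" "y \<in> S" for x y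
    using padd that by (simp add: \<psi>_def)
  have \<psi>R: "\<psi> (r *\<^sub>R x) = r * \<psi> x" if "x \<in> S" for r x
  proof -
    have "\<phi> (r *\<^sub>R x) = complex_of_real r * \<phi> x"
      using psc that cscale_of_real[of r x] by metis
    then show ?thesis by (simp add: \<psi>_def)
  qed
  have \<psi>b: "\<bar>\<psi> x\<bar> \<le> C * norm x" if "x \<in> S" for x
    using pb that abs_Re_le_cmod[of "\<phi> x"] unfolding \<psi>_def by force
  define F where "F x = (norm x)\<^sup>2 - 2 * \<psi> x" for x
  have Flow: "F x \<ge> - C\<^sup>2" if "x \<in> S" for x
  proof -
    have "\<psi> x \<le> C * norm x" using \<psi>b[OF that] by simp
    moreover have "(norm x - C)\<^sup>2 \<ge> 0" by simp
    ultimately show ?thesis unfolding F_def by (simp add: power2_eq_square algebra_simps)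
  qed
  define d where "d = Inf (F ` S)"
  have bdd: "bdd_below (F ` S)" using Flow by (intro bdd_belowI[where m="- C\<^sup>2"]) auto
  have dle: "d \<le> F x" if "x \<in> S" for x
    unfolding d_def using bdd that by (simp add: cInf_lower)
  have "\<forall>n. \<exists>x. x \<in> S \<and> F x < d + inverse (real (Suc n))"
  proof
    fix n
    have "d < d + inverse (real (Suc n))" by simp
    then have "\<exists>y\<in>F ` S. y < d + inverse (real (Suc n))"
      unfolding d_def using S0 by (intro cInf_lessD) auto
    then show "\<exists>x. x \<in> S \<and> F x < d + inverse (real (Suc n))" by auto
  qed
  then obtain x where xS: "\<And>n. x n \<in> S" and xF: "\<And>n. F (x n) < d + inverse (real (Suc n))"
    by metis
  have par: "(norm (a - b))\<^sup>2 = 2 * (F a + F b - 2 * F ((1/2) *\<^sub>R (a + b)))"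
    if "a \<in> S" "b \<in> S" for a b
  proof -
    have "\<psi> ((1/2) *\<^sub>R (a + b)) = (\<psi> a + \<psi> b) / 2"
      using that Sadd by (simp add: \<psi>R \<psi>add)
    moreover have "(norm ((1/2) *\<^sub>R (a + b)))\<^sup>2 = (norm (a + b))\<^sup>2 / 4"
      by (simp add: power2_eq_square)
    moreover have "(norm (a + b))\<^sup>2 = (norm a)\<^sup>2 + (norm b)\<^sup>2 + 2 * Re (cinner a b)"
      by (rule norm_add_sq)
    moreover have "(norm (a + - b))\<^sup>2 = (norm a)\<^sup>2 + (norm (-b))\<^sup>2 + 2 * Re (cinner a (-b))"
      by (rule norm_add_sq)
    ultimately show ?thesis unfolding F_def by (simp add: algebra_simps)
  qed
  have xd: "(norm (x p - x q))\<^sup>2 < 2 * (inverse (real (Suc p)) + inverse (real (Suc q)))" for p q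
  proof -
    have "(1/2) *\<^sub>R (x p + x q) \<in> S" using xS Sadd SR by blast
    then have "d \<le> F ((1/2) *\<^sub>R (x p + x q))" by (rule dle)
    then show ?thesis using par[OF xS xS, of p q] xF[of p] xF[of q] by argo
  qed
  have "Cauchy x"
  proof (rule CauchyI)
    fix e :: real assume e: "e > 0"
    obtain M :: nat where M: "4 / e\<^sup>2 < real M" using reals_Archimedean2 by blast
    have "norm (x m - x n) < e" if "M \<le> m" "M \<le> n" for m n
    proof -
      have Mp: "real M > 0" using M e by (smt (verit) divide_pos_pos zero_less_power)
      have i1: "inverse (real (Suc m)) \<le> inverse (real M)" using that Mp
        by (simp add: le_imp_inverse_le)
      have i2: "inverse (real (Suc n)) \<le> inverse (real M)" using that Mp
        by (simp add: le_imp_inverse_le)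
      have "4 * inverse (real M) < e\<^sup>2" using M Mp e
        by (simp add: field_simps)
      then have "(norm (x m - x n))\<^sup>2 < e\<^sup>2" using xd[of m n] i1 i2 by argo
      then show ?thesis using e by (simp add: power_less_imp_less_base)
    qed
    then show "\<exists>M. \<forall>m\<ge>M. \<forall>n\<ge>M. norm (x m - x n) < e" by blast
  qed
  then obtain w where xw: "x \<longlonglongrightarrow> w" using Cauchy_convergent convergent_def by blast
  have Fd: "(\<lambda>n. F (x n)) \<longlonglongrightarrow> d"
  proof (rule tendsto_sandwich[of "\<lambda>n. d" _ _ "\<lambda>n. d + inverse (real (Suc n))"])
    show "\<forall>\<^sub>F n in sequentially. d \<le> F (x n)" using dle xS by simp
    show "\<forall>\<^sub>F n in sequentially. F (x n) \<le> d + inverse (real (Suc n))"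
      using xF by (intro always_eventually allI less_imp_le) 
    show "(\<lambda>n. d + inverse (real (Suc n))) \<longlonglongrightarrow> d"
      using tendsto_add[OF tendsto_const LIMSEQ_inverse_real_of_nat, of d] by simp
  qed simp
  have re: "\<psi> y = Re (cinner y w)" if yS: "y \<in> S" for y
  proof -
    define a where "a = Re (cinner w y) - \<psi> y"
    have "2 * t * a + t\<^sup>2 * (norm y)\<^sup>2 \<ge> 0" for t
    proof -
      have expand: "F (x n + t *\<^sub>R y) = F (x n) + 2 * t * (Re (cinner (x n) y) - \<psi> y) + t\<^sup>2 * (norm y)\<^sup>2" for n
      proof -
        have "(norm (x n + t *\<^sub>R y))\<^sup>2 = (norm (x n))\<^sup>2 + (norm (t *\<^sub>R y))\<^sup>2 + 2 * Re (cinner (x n) (t *\<^sub>R y))"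
          by (rule norm_add_sq)
        moreover have "\<psi> (x n + t *\<^sub>R y) = \<psi> (x n) + t * \<psi> y"
          using xS yS SR by (simp add: \<psi>add \<psi>R)
        ultimately show ?thesis unfolding F_def
          by (simp add: cinner_scaleR_right power_mult_distrib algebra_simps)
      qed
      have lim: "(\<lambda>n. F (x n) + 2 * t * (Re (cinner (x n) y) - \<psi> y) + t\<^sup>2 * (norm y)\<^sup>2)
          \<longlonglongrightarrow> d + 2 * t * (Re (cinner w y) - \<psi> y) + t\<^sup>2 * (norm y)\<^sup>2"
        by (intro tendsto_intros Fd tendsto_Re bounded_linear.tendsto[OF bounded_linear_cinner_left] xw)
      have "d \<le> d + 2 * t * (Re (cinner w y) - \<psi> y) + t\<^sup>2 * (norm y)\<^sup>2"
      proof (rule LIMSEQ_le_const[OF lim])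
        show "\<exists>N. \<forall>n\<ge>N. d \<le> F (x n) + 2 * t * (Re (cinner (x n) y) - \<psi> y) + t\<^sup>2 * (norm y)\<^sup>2"
          using dle xS yS SR Sadd expand by (metis order_refl)
      qed
      then show ?thesis unfolding a_def by simp
    qed
    then have "a = 0" by (intro quad_nonneg_imp_zero[of "(norm y)\<^sup>2"]) auto
    then show ?thesis unfolding a_def using cinner_commute[of y w] by simp
  qed
  have "\<phi> y = cinner y w" if yS: "y \<in> S" for y
  proof (rule complex_eqI)
    show "Re (\<phi> y) = Re (cinner y w)" using re[OF yS] by (simp add: \<psi>_def)
    have iS: "cscale \<i> y \<in> S" using Ssc yS by blast
    have "Re (\<phi> (cscale \<i> y)) = Re (cinner (cscale \<i> y) w)" using re[OF iS] by (simp add: \<psi>_def)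
    then show "Im (\<phi> y) = Im (cinner y w)" using psc yS by (simp add: cinner_cscale_left)
  qed
  then show ?thesis by blast
qed



lemma green_cinner: "green fh gh = cinner fh (- snd gh, fst gh)"
  by (simp add: green_def cinner_prod_def)

lemma norm_J: "norm ((- snd gh, fst gh) :: 'a::real_normed_vector \<times> 'a) = norm gh"
  by (simp add: norm_prod_def add.commute)

lemma green_bound: "cmod (green fh gh) \<le> norm fh * norm gh"
  using cauchy_schwarz[of fh "(- snd gh, fst gh)"] by (simp add: green_cinner norm_J)

lemma green_add_right: "green fh (g + h) = green fh g + green fh h"
  by (simp add: green_def cinner_add_right)

lemma clinear_on_scaleR:
  assumes "clinear_on S T" "x \<in> S"
  shows "T (r *\<^sub>R x) = r *\<^sub>R T x"
  using assms unfolding clinear_on_def by (metis cscale_of_real)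

lemma clinear_subspace_scaleR:
  assumes "clinear_subspace S" "x \<in> S"
  shows "r *\<^sub>R x \<in> S"
  using assms unfolding clinear_subspace_def by (metis cscale_of_real)

lemma clinear_subspace_diff:
  assumes "clinear_subspace S" "x \<in> S" "y \<in> S"
  shows "x - y \<in> S"
proof -
  have "(-1) *\<^sub>R y \<in> S" using clinear_subspace_scaleR assms by blast
  then show ?thesis using assms unfolding clinear_subspace_def by (metis scaleR_minus1_left diff_conv_add_uminus)
qed

lemma clinear_on_diff:
  assumes "clinear_subspace S" "clinear_on S T" "x \<in> S" "y \<in> S"
  shows "T (x - y) = T x - T y"
proof -
  have m: "(-1) *\<^sub>R y \<in> S" using clinear_subspace_scaleR assms by blast
  have "T (x + (-1) *\<^sub>R y) = T x + T ((-1) *\<^sub>R y)"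
    using assms m unfolding clinear_on_def by blast
  also have "T ((-1) *\<^sub>R y) = - T y" using clinear_on_scaleR[OF assms(2,4), of "-1"] by simp
  finally show ?thesis by simp
qed

lemma clinear_on_zero:
  assumes "clinear_subspace S" "clinear_on S T"
  shows "T 0 = 0"
proof -
  have "0 \<in> S" using assms unfolding clinear_subspace_def by blast
  then have "T (0 + 0) = T 0 + T 0" using assms unfolding clinear_on_def by blast
  then show ?thesis by simp
qed

lemma bounded_from_weak:
  fixes T :: "'a::complex_hilbert \<Rightarrow> 'b::complex_hilbert"
  assumes S: "clinear_subspace S" and L: "clinear_on S T"
    and wb: "\<And>k. \<exists>C. \<forall>fh\<in>S. cmod (cinner (T fh) k) \<le> C * norm fh"
  shows "bounded_on S T"
proof -
  define V where "V = {T fh | fh. fh \<in> S \<and> norm fh \<le> 1}"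
  have "\<exists>C. \<forall>v\<in>V. cmod (cinner v k) \<le> C" for k
  proof -
    obtain C where C: "\<forall>fh\<in>S. cmod (cinner (T fh) k) \<le> C * norm fh" using wb by blast
    have "cmod (cinner v k) \<le> \<bar>C\<bar>" if "v \<in> V" for v
    proof -
      obtain fh where fh: "v = T fh" "fh \<in> S" "norm fh \<le> 1" using \<open>v \<in> V\<close> V_def by blast
      have "C * norm fh \<le> \<bar>C\<bar> * norm fh" by (simp add: mult_right_mono)
      also have "\<dots> \<le> \<bar>C\<bar>" using fh(3) by (simp add: mult_left_le)
      finally show ?thesis using C fh by fastforce
    qed
    then show ?thesis by blast
  qed
  then obtain B where B: "\<forall>v\<in>V. norm v \<le> B" using ubp by blast
  have "norm (T fh) \<le> B * norm fh" if fh: "fh \<in> S" for fh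
  proof (cases "fh = 0")
    case True then show ?thesis using clinear_on_zero[OF S L] by simp
  next
    case False
    define g where "g = inverse (norm fh) *\<^sub>R fh"
    have gS: "g \<in> S" using clinear_subspace_scaleR[OF S fh] g_def by blast
    have "norm g = 1" using False by (simp add: g_def)
    then have "T g \<in> V" using gS unfolding V_def by force
    then have "norm (T g) \<le> B" using B by blast
    moreover have "T g = inverse (norm fh) *\<^sub>R T fh" using clinear_on_scaleR[OF L fh] g_def by blast
    ultimately have "inverse (norm fh) * norm (T fh) \<le> B" by simp
    then show ?thesis using False by (simp add: field_simps)
  qed
  then show ?thesis unfolding bounded_on_def by blast
qed

lemma bounded_on_cauchy:
  assumes S: "clinear_subspace S" and L: "clinear_on S T" and B: "bounded_on S T"
    and f: "\<And>n. f n \<in> S" and c: "Cauchy f"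
  shows "Cauchy (\<lambda>n. T (f n))"
proof -
  obtain C where C: "\<forall>x\<in>S. norm (T x) \<le> C * norm x" using B bounded_on_def by blast
  define C' where "C' = \<bar>C\<bar> + 1"
  have C'p: "C' > 0" by (simp add: C'_def)
  have C': "norm (T x) \<le> C' * norm x" if "x \<in> S" for x
  proof -
    have "C * norm x \<le> C' * norm x" by (simp add: C'_def mult_right_mono)
    then show ?thesis using C that by fastforce
  qed
  show ?thesis
  proof (rule CauchyI)
    fix e :: real assume e: "e > 0"
    obtain M where M: "\<forall>m\<ge>M. \<forall>n\<ge>M. norm (f m - f n) < e / C'"
      using CauchyD[OF c, of "e / C'"] e C'p by auto
    have "norm (T (f m) - T (f n)) < e" if "m \<ge> M" "n \<ge> M" for m n
    proof -
      have "T (f m) - T (f n) = T (f m - f n)" using clinear_on_diff[OF S L f f] by simp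
      moreover have "norm (T (f m - f n)) \<le> C' * norm (f m - f n)"
        using C' clinear_subspace_diff[OF S f f] by blast
      moreover have "C' * norm (f m - f n) < e" using M that C'p by (simp add: field_simps)
      ultimately show ?thesis by simp
    qed
    then show "\<exists>M. \<forall>m\<ge>M. \<forall>n\<ge>M. norm (T (f m) - T (f n)) < e" by blast
  qed
qed

lemma riesz_green:
  fixes T :: "'h::complex_hilbert \<times> 'h \<Rightarrow> 'k::complex_hilbert"
  assumes S: "clinear_subspace S" and L: "clinear_on S T" and B: "bounded_on S T"
  shows "\<exists>gh. \<forall>fh\<in>S. green fh gh = cinner (T fh) m"
proof -
  obtain C where C: "\<forall>x\<in>S. norm (T x) \<le> C * norm x" using B bounded_on_def by blast
  have "\<exists>w. \<forall>x\<in>S. cinner (T x) m = cinner x w"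
  proof (rule riesz_sub[where C="C * norm m"])
    show "0 \<in> S" "\<forall>x\<in>S. \<forall>y\<in>S. x + y \<in> S" "\<forall>a. \<forall>x\<in>S. cscale a x \<in> S"
      using S unfolding clinear_subspace_def by auto
    show "\<forall>x\<in>S. \<forall>y\<in>S. cinner (T (x + y)) m = cinner (T x) m + cinner (T y) m"
      using L unfolding clinear_on_def by (simp add: cinner_add_left)
    show "\<forall>a. \<forall>x\<in>S. cinner (T (cscale a x)) m = a * cinner (T x) m"
      using L unfolding clinear_on_def by (simp add: cinner_cscale_left)
    show "\<forall>x\<in>S. cmod (cinner (T x) m) \<le> C * norm m * norm x"
    proof
      fix x assume x: "x \<in> S"
      have "cmod (cinner (T x) m) \<le> norm (T x) * norm m" by (rule cauchy_schwarz)
      also have "\<dots> \<le> C * norm x * norm m" using C x by (simp add: mult_right_mono)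
      finally show "cmod (cinner (T x) m) \<le> C * norm m * norm x" by (simp add: algebra_simps)
    qed
  qed
  then obtain w where w: "\<forall>x\<in>S. cinner (T x) m = cinner x w" by blast
  have "green fh (snd w, - fst w) = cinner (T fh) m" if "fh \<in> S" for fh
    using w that by (simp add: green_cinner)
  then show ?thesis by blast
qed



theorem mainTheorem15:
  fixes A Astar :: "('h::complex_hilbert \<times> 'h) set"
    and \<Gamma>0 \<Gamma>1 :: "'h \<times> 'h \<Rightarrow> 'k::complex_hilbert"
  assumes "unitary_boundary_triple A Astar \<Gamma>0 \<Gamma>1"
  shows "((bounded_on Astar \<Gamma>0 \<and> \<Gamma>0 ` Astar = UNIV)
            \<longleftrightarrow> (bounded_on Astar \<Gamma>1 \<and> \<Gamma>1 ` Astar = UNIV))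
       \<and> ((bounded_on Astar \<Gamma>1 \<and> \<Gamma>1 ` Astar = UNIV)
            \<longleftrightarrow> ordinary_boundary_triple A Astar \<Gamma>0 \<Gamma>1)"
proof -
  have U: "closed_symmetric_rel A \<and>
     clinear_subspace Astar \<and> Astar \<subseteq> adjoint_rel A \<and> closure Astar = adjoint_rel A \<and>
     clinear_on Astar \<Gamma>0 \<and> clinear_on Astar \<Gamma>1 \<and>
     (\<forall>fh\<in>Astar. \<forall>gh\<in>Astar.
        green fh gh = cinner (\<Gamma>1 fh) (\<Gamma>0 gh) - cinner (\<Gamma>0 fh) (\<Gamma>1 gh)) \<and>
     (\<forall>gh k0 k1. (\<forall>fh\<in>Astar. green fh gh = cinner (\<Gamma>1 fh) k0 - cinner (\<Gamma>0 fh) k1)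
        \<longrightarrow> gh \<in> Astar \<and> \<Gamma>0 gh = k0 \<and> \<Gamma>1 gh = k1)"
    using assms unfolding unitary_boundary_triple_def .
  note U2 = conjunct2[OF U]
  note U3 = conjunct2[OF U2]
  note U4 = conjunct2[OF U3]
  note U5 = conjunct2[OF U4]
  note U6 = conjunct2[OF U5]
  note U7 = conjunct2[OF U6]
  note csA = conjunct1[OF U] and S = conjunct1[OF U2] and cl = conjunct1[OF U4]
    and L0 = conjunct1[OF U5] and L1 = conjunct1[OF U6] and G = conjunct1[OF U7]
    and M0 = conjunct2[OF U7]
  note M = M0[rule_format]
  have Sadd: "x + y \<in> Astar" if "x \<in> Astar" "y \<in> Astar" for x y
    using S that unfolding clinear_subspace_def by blast
  have W: "bounded_on Astar \<Gamma>0 \<and> bounded_on Astar \<Gamma>1"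
    if surj: "(\<lambda>fh. (\<Gamma>0 fh, \<Gamma>1 fh)) ` Astar = UNIV"
  proof
    show "bounded_on Astar \<Gamma>0"
    proof (rule bounded_from_weak[OF S L0])
      fix k
      have "(0, - k) \<in> (\<lambda>fh. (\<Gamma>0 fh, \<Gamma>1 fh)) ` Astar" using surj by simp
      then obtain gh where gh: "gh \<in> Astar" "\<Gamma>0 gh = 0" "\<Gamma>1 gh = - k" by auto
      have "cmod (cinner (\<Gamma>0 fh) k) \<le> norm gh * norm fh" if "fh \<in> Astar" for fh
      proof -
        have "green fh gh = cinner (\<Gamma>0 fh) k" using G that gh by simp
        then show ?thesis using green_bound[of fh gh] by (simp add: mult.commute)
      qed
      then show "\<exists>C. \<forall>fh\<in>Astar. cmod (cinner (\<Gamma>0 fh) k) \<le> C * norm fh" by blast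
    qed
    show "bounded_on Astar \<Gamma>1"
    proof (rule bounded_from_weak[OF S L1])
      fix k
      have "(k, 0) \<in> (\<lambda>fh. (\<Gamma>0 fh, \<Gamma>1 fh)) ` Astar" using surj by simp
      then obtain gh where gh: "gh \<in> Astar" "\<Gamma>0 gh = k" "\<Gamma>1 gh = 0" by auto
      have "cmod (cinner (\<Gamma>1 fh) k) \<le> norm gh * norm fh" if "fh \<in> Astar" for fh
      proof -
        have "green fh gh = cinner (\<Gamma>1 fh) k" using G that gh by simp
        then show ?thesis using green_bound[of fh gh] by (simp add: mult.commute)
      qed
      then show "\<exists>C. \<forall>fh\<in>Astar. cmod (cinner (\<Gamma>1 fh) k) \<le> C * norm fh" by blast
    qed
  qed
  have C: "Astar = adjoint_rel A" if B0: "bounded_on Astar \<Gamma>0" and B1: "bounded_on Astar \<Gamma>1"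
  proof -
    have "gh \<in> Astar" if gh: "gh \<in> closure Astar" for gh
    proof -
      obtain f where f: "\<And>n. f n \<in> Astar" and fl: "f \<longlonglongrightarrow> gh"
        using gh closure_sequential by blast
      have cf: "Cauchy f" using fl by (rule LIMSEQ_imp_Cauchy)
      obtain k0 where k0: "(\<lambda>n. \<Gamma>0 (f n)) \<longlonglongrightarrow> k0"
        using bounded_on_cauchy[OF S L0 B0 f cf] Cauchy_convergent convergent_def by blast
      obtain k1 where k1: "(\<lambda>n. \<Gamma>1 (f n)) \<longlonglongrightarrow> k1"
        using bounded_on_cauchy[OF S L1 B1 f cf] Cauchy_convergent convergent_def by blast
      have "green fh gh = cinner (\<Gamma>1 fh) k0 - cinner (\<Gamma>0 fh) k1" if fh: "fh \<in> Astar" for fh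
      proof -
        have l1: "(\<lambda>n. green fh (f n)) \<longlonglongrightarrow> green fh gh"
          unfolding green_def
          by (intro tendsto_intros bounded_linear.tendsto[OF bounded_linear_cinner_right]
              tendsto_fst tendsto_snd fl)
        have l2: "(\<lambda>n. cinner (\<Gamma>1 fh) (\<Gamma>0 (f n)) - cinner (\<Gamma>0 fh) (\<Gamma>1 (f n)))
            \<longlonglongrightarrow> cinner (\<Gamma>1 fh) k0 - cinner (\<Gamma>0 fh) k1"
          by (intro tendsto_intros bounded_linear.tendsto[OF bounded_linear_cinner_right] k0 k1)
        have "(\<lambda>n. green fh (f n)) = (\<lambda>n. cinner (\<Gamma>1 fh) (\<Gamma>0 (f n)) - cinner (\<Gamma>0 fh) (\<Gamma>1 (f n)))"
          using G fh f by auto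
        then show ?thesis using l1 l2 LIMSEQ_unique by metis
      qed
      then show ?thesis using M by blast
    qed
    then have "closure Astar \<subseteq> Astar" by blast
    then show ?thesis using cl closure_subset by blast
  qed
  have S0: "(\<lambda>fh. (\<Gamma>0 fh, \<Gamma>1 fh)) ` Astar = UNIV"
    if B0: "bounded_on Astar \<Gamma>0" and R0: "\<Gamma>0 ` Astar = UNIV"
  proof -
    have "(k0, k1) \<in> (\<lambda>fh. (\<Gamma>0 fh, \<Gamma>1 fh)) ` Astar" for k0 k1
    proof -
      obtain g0 where g0: "g0 \<in> Astar" "\<Gamma>0 g0 = k0" using R0 by (metis UNIV_I imageE)
      obtain gh1 where gh1: "\<forall>fh\<in>Astar. green fh gh1 = cinner (\<Gamma>0 fh) (- (k1 - \<Gamma>1 g0))"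
        using riesz_green[OF S L0 B0] by blast
      have "green fh (g0 + gh1) = cinner (\<Gamma>1 fh) k0 - cinner (\<Gamma>0 fh) k1" if "fh \<in> Astar" for fh
        using G g0 gh1 that by (simp add: green_add_right cinner_diff_right)
      then have "g0 + gh1 \<in> Astar \<and> \<Gamma>0 (g0 + gh1) = k0 \<and> \<Gamma>1 (g0 + gh1) = k1" using M by blast
      then show ?thesis by force
    qed
    then show ?thesis by auto
  qed
  have S1: "(\<lambda>fh. (\<Gamma>0 fh, \<Gamma>1 fh)) ` Astar = UNIV"
    if B1: "bounded_on Astar \<Gamma>1" and R1: "\<Gamma>1 ` Astar = UNIV"
  proof -
    have "(k0, k1) \<in> (\<lambda>fh. (\<Gamma>0 fh, \<Gamma>1 fh)) ` Astar" for k0 k1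
    proof -
      obtain g1 where g1: "g1 \<in> Astar" "\<Gamma>1 g1 = k1" using R1 by (metis UNIV_I imageE)
      obtain gh1 where gh1: "\<forall>fh\<in>Astar. green fh gh1 = cinner (\<Gamma>1 fh) (k0 - \<Gamma>0 g1)"
        using riesz_green[OF S L1 B1] by blast
      have "green fh (g1 + gh1) = cinner (\<Gamma>1 fh) k0 - cinner (\<Gamma>0 fh) k1" if "fh \<in> Astar" for fh
        using G g1 gh1 that by (simp add: green_add_right cinner_diff_right)
      then have "g1 + gh1 \<in> Astar \<and> \<Gamma>0 (g1 + gh1) = k0 \<and> \<Gamma>1 (g1 + gh1) = k1" using M by blast
      then show ?thesis by force
    qed
    then show ?thesis by auto
  qed
  have ordI: "ordinary_boundary_triple A Astar \<Gamma>0 \<Gamma>1"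
    if surj: "(\<lambda>fh. (\<Gamma>0 fh, \<Gamma>1 fh)) ` Astar = UNIV"
  proof -
    have "Astar = adjoint_rel A" using W[OF surj] C by blast
    then show ?thesis unfolding ordinary_boundary_triple_def using csA L0 L1 G surj by blast
  qed
  have ordE: "bounded_on Astar \<Gamma>0 \<and> \<Gamma>0 ` Astar = UNIV \<and> bounded_on Astar \<Gamma>1 \<and> \<Gamma>1 ` Astar = UNIV"
    if O: "ordinary_boundary_triple A Astar \<Gamma>0 \<Gamma>1"
  proof -
    have surj: "(\<lambda>fh. (\<Gamma>0 fh, \<Gamma>1 fh)) ` Astar = UNIV"
      using O unfolding ordinary_boundary_triple_def by blast
    have "\<Gamma>0 ` Astar = UNIV"
    proof -
      have "k \<in> \<Gamma>0 ` Astar" for k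
      proof -
        have "(k, 0) \<in> (\<lambda>fh. (\<Gamma>0 fh, \<Gamma>1 fh)) ` Astar" using surj by simp
        then show ?thesis by force
      qed
      then show ?thesis by blast
    qed
    moreover have "\<Gamma>1 ` Astar = UNIV"
    proof -
      have "k \<in> \<Gamma>1 ` Astar" for k
      proof -
        have "(0, k) \<in> (\<lambda>fh. (\<Gamma>0 fh, \<Gamma>1 fh)) ` Astar" using surj by simp
        then show ?thesis by force
      qed
      then show ?thesis by blast
    qed
    ultimately show ?thesis using W[OF surj] by blast
  qed
  have P0O: "(bounded_on Astar \<Gamma>0 \<and> \<Gamma>0 ` Astar = UNIV) \<longleftrightarrow> ordinary_boundary_triple A Astar \<Gamma>0 \<Gamma>1"
    using S0 ordI ordE by blast
  have P1O: "(bounded_on Astar \<Gamma>1 \<and> \<Gamma>1 ` Astar = UNIV) \<longleftrightarrow> ordinary_boundary_triple A Astar \<Gamma>0 \<Gamma>1"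
    using S1 ordI ordE by blast
  show ?thesis using P0O P1O by simp
qed

end
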